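(* Let $G$ be a graph of order $n\ge 9$ with twin number $\tau$, and let $W$ be a $\tau$-set. Then $\beta_p(G)=n-1$ if and only if either (i) $\tau=n-1$, or (ii) $\tau=n-2$ and $G[W]\cong K_{n-2}$.
   Context: All graphs are finite, simple, undirected and connected. Two vertices $u,v$ are twins if $N(u)\setminus\{v\}=N(v)\setminus\{u\}$; the twin number $\tau(G)$ is the maximum cardinality of an equivalence class of the twin relation; a $\tau$-set is a set of pairwise twin vertices of cardinality $\tau(G)$. For a partition $\Pi=\{S_1,\dots,S_k\}$ of $V(G)$, $r(u|\Pi)=(d(u,S_1),\dots,d(u,S_k))$ with $d(u,S)=\min_{w\in S}d(u,w)$; $\Pi$ is locating if $r(u|\Pi)\ne r(v|\Pi)$ for all distinct $u,v$; $\beta_p(G)$ is the minimum size of a locating partition. *)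

theory Defs
  imports Main "HOL-Library.Disjoint_Sets"
begin

definition simple_graph :: "'a set \<Rightarrow> ('a \<Rightarrow> 'a \<Rightarrow> bool) \<Rightarrow> bool" where
  "simple_graph V E \<longleftrightarrow> finite V \<and> V \<noteq> {} \<and>
     (\<forall>u v. E u v \<longrightarrow> u \<in> V \<and> v \<in> V) \<and>
     (\<forall>u v. E u v \<longrightarrow> E v u) \<and> (\<forall>u. \<not> E u u)"

definition walk :: "'a set \<Rightarrow> ('a \<Rightarrow> 'a \<Rightarrow> bool) \<Rightarrow> 'a list \<Rightarrow> bool" where
  "walk V E p \<longleftrightarrow> p \<noteq> [] \<and> set p \<subseteq> V \<and> (\<forall>i. Suc i < length p \<longrightarrow> E (p ! i) (p ! Suc i))"

definition connected_graph :: "'a set \<Rightarrow> ('a \<Rightarrow> 'a \<Rightarrow> bool) \<Rightarrow> bool" where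
  "connected_graph V E \<longleftrightarrow>
     (\<forall>u\<in>V. \<forall>v\<in>V. \<exists>p. walk V E p \<and> hd p = u \<and> last p = v)"

definition dist :: "'a set \<Rightarrow> ('a \<Rightarrow> 'a \<Rightarrow> bool) \<Rightarrow> 'a \<Rightarrow> 'a \<Rightarrow> nat" where
  "dist V E u v = (LEAST k. \<exists>p. walk V E p \<and> hd p = u \<and> last p = v \<and> length p = Suc k)"

definition dist_set :: "'a set \<Rightarrow> ('a \<Rightarrow> 'a \<Rightarrow> bool) \<Rightarrow> 'a \<Rightarrow> 'a set \<Rightarrow> nat" where
  "dist_set V E u S = Min ((\<lambda>w. dist V E u w) ` S)"

definition nbhd :: "'a set \<Rightarrow> ('a \<Rightarrow> 'a \<Rightarrow> bool) \<Rightarrow> 'a \<Rightarrow> 'a set" where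
  "nbhd V E u = {w \<in> V. E u w}"

definition twins :: "'a set \<Rightarrow> ('a \<Rightarrow> 'a \<Rightarrow> bool) \<Rightarrow> 'a \<Rightarrow> 'a \<Rightarrow> bool" where
  "twins V E u v \<longleftrightarrow> nbhd V E u - {v} = nbhd V E v - {u}"

definition twin_class :: "'a set \<Rightarrow> ('a \<Rightarrow> 'a \<Rightarrow> bool) \<Rightarrow> 'a \<Rightarrow> 'a set" where
  "twin_class V E u = {v \<in> V. twins V E u v}"

definition twin_number :: "'a set \<Rightarrow> ('a \<Rightarrow> 'a \<Rightarrow> bool) \<Rightarrow> nat" where
  "twin_number V E = Max ((\<lambda>u. card (twin_class V E u)) ` V)"

definition tau_set :: "'a set \<Rightarrow> ('a \<Rightarrow> 'a \<Rightarrow> bool) \<Rightarrow> 'a set \<Rightarrow> bool" where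
  "tau_set V E W \<longleftrightarrow> W \<subseteq> V \<and> (\<forall>u\<in>W. \<forall>v\<in>W. twins V E u v) \<and>
     card W = twin_number V E"

definition rep :: "'a set \<Rightarrow> ('a \<Rightarrow> 'a \<Rightarrow> bool) \<Rightarrow> 'a set set \<Rightarrow> 'a \<Rightarrow> ('a set \<Rightarrow> nat)" where
  "rep V E P u = restrict (\<lambda>S. dist_set V E u S) P"

definition locating_partition :: "'a set \<Rightarrow> ('a \<Rightarrow> 'a \<Rightarrow> bool) \<Rightarrow> 'a set set \<Rightarrow> bool" where
  "locating_partition V E P \<longleftrightarrow> partition_on V P \<and>
     (\<forall>u\<in>V. \<forall>v\<in>V. u \<noteq> v \<longrightarrow> rep V E P u \<noteq> rep V E P v)"

definition partition_dimension :: "'a set \<Rightarrow> ('a \<Rightarrow> 'a \<Rightarrow> bool) \<Rightarrow> nat" where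
  "partition_dimension V E = (LEAST k. \<exists>P. locating_partition V E P \<and> card P = k)"

definition induced_complete :: "'a set \<Rightarrow> ('a \<Rightarrow> 'a \<Rightarrow> bool) \<Rightarrow> 'a set \<Rightarrow> nat \<Rightarrow> bool" where
  "induced_complete V E W m \<longleftrightarrow> W \<subseteq> V \<and> card W = m \<and>
     (\<forall>u\<in>W. \<forall>v\<in>W. u \<noteq> v \<longrightarrow> E u v)"

end

theory Submission
  imports Defs
begin


locale sg =
  fixes V :: "'a set" and E :: "'a \<Rightarrow> 'a \<Rightarrow> bool"
  assumes simp_g: "simple_graph V E" and conn_g: "connected_graph V E"
begin

lemma finV: "finite V" using simp_g by (simp add: simple_graph_def)
lemma Esym: "E u v \<Longrightarrow> E v u" using simp_g by (simp add: simple_graph_def)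
lemma Eirr: "\<not> E u u" using simp_g by (simp add: simple_graph_def)
lemma EV1: "E u v \<Longrightarrow> u \<in> V" using simp_g by (simp add: simple_graph_def)
lemma EV2: "E u v \<Longrightarrow> v \<in> V" using simp_g by (simp add: simple_graph_def)
lemma Ecomm: "E u v = E v u" using Esym by blast

lemma walk_single: "walk V E [x] \<longleftrightarrow> x \<in> V"
  by (auto simp: walk_def)

lemma walk_Cons2: "walk V E (x # y # r) \<longleftrightarrow> x \<in> V \<and> E x y \<and> walk V E (y # r)"
proof
  assume w: "walk V E (x # y # r)"
  have "Suc 0 < length (x # y # r) \<longrightarrow> E ((x # y # r) ! 0) ((x # y # r) ! Suc 0)"
    using w unfolding walk_def by blast
  then have "E x y" by simp
  moreover have "walk V E (y # r)"
    unfolding walk_def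
  proof (intro conjI allI impI)
    show "set (y # r) \<subseteq> V" using w by (auto simp: walk_def)
    fix i assume "Suc i < length (y # r)"
    then have "Suc (Suc i) < length (x # y # r)" by simp
    then have "E ((x#y#r) ! Suc i) ((x#y#r) ! Suc (Suc i))" using w unfolding walk_def by blast
    then show "E ((y # r) ! i) ((y # r) ! Suc i)" by simp
  qed simp
  ultimately show "x \<in> V \<and> E x y \<and> walk V E (y # r)" using w by (auto simp: walk_def)
next
  assume h: "x \<in> V \<and> E x y \<and> walk V E (y # r)"
  show "walk V E (x # y # r)"
    unfolding walk_def
  proof (intro conjI allI impI)
    show "set (x # y # r) \<subseteq> V" using h by (auto simp: walk_def)
    fix i assume i: "Suc i < length (x # y # r)"
    show "E ((x # y # r) ! i) ((x # y # r) ! Suc i)"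
    proof (cases i)
      case 0 then show ?thesis using h by simp
    next
      case (Suc j)
      then have "Suc j < length (y # r)" using i by simp
      then have "E ((y#r) ! j) ((y#r) ! Suc j)" using h unfolding walk_def by blast
      then show ?thesis using Suc by simp
    qed
  qed simp
qed

lemma walk_exists: "u \<in> V \<Longrightarrow> v \<in> V \<Longrightarrow> \<exists>p. walk V E p \<and> hd p = u \<and> last p = v"
  using conn_g by (auto simp: connected_graph_def)

lemma dist_witness:
  assumes "u \<in> V" "v \<in> V"
  shows "\<exists>p. walk V E p \<and> hd p = u \<and> last p = v \<and> length p = Suc (dist V E u v)"
proof -
  obtain p where p: "walk V E p" "hd p = u" "last p = v" using walk_exists assms by blast
  then have ne: "p \<noteq> []" by (simp add: walk_def)
  then have "\<exists>k p. walk V E p \<and> hd p = u \<and> last p = v \<and> length p = Suc k"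
    using p by (intro exI[of _ "length p - 1"] exI[of _ p]) auto
  then show ?thesis unfolding dist_def by (rule LeastI_ex)
qed

lemma dist_le:
  assumes "walk V E p" "hd p = u" "last p = v" "length p = Suc k"
  shows "dist V E u v \<le> k"
  unfolding dist_def using assms by (intro Least_le) blast

lemma dist_self: "u \<in> V \<Longrightarrow> dist V E u u = 0"
  using dist_le[of "[u]" u u 0] by (simp add: walk_single)

lemma dist_pos: assumes "u \<in> V" "v \<in> V" "u \<noteq> v" shows "dist V E u v \<noteq> 0"
proof
  assume d: "dist V E u v = 0"
  obtain p where p: "walk V E p" "hd p = u" "last p = v" "length p = Suc 0"
    using dist_witness[OF assms(1,2)] d by auto
  then obtain x where "p = [x]" by (cases p) auto
  then show False using p assms(3) by simp
qed

lemma dist_adj: assumes "E u v" shows "dist V E u v = 1"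
proof -
  have uv: "u \<in> V" "v \<in> V" "u \<noteq> v" using assms EV1 EV2 Eirr by auto
  have "walk V E [u, v]" using walk_Cons2 walk_single assms uv by auto
  then have "dist V E u v \<le> 1" using dist_le[of "[u,v]" u v 1] by simp
  then show ?thesis using dist_pos[OF uv] by simp
qed

lemma dist_one: assumes "u \<in> V" "v \<in> V" "dist V E u v = 1" shows "E u v"
proof -
  obtain p where p: "walk V E p" "hd p = u" "last p = v" "length p = Suc 1"
    using dist_witness[OF assms(1,2)] assms(3) by auto
  then obtain x y where "p = [x, y]"
    by (cases p; cases "tl p") auto
  then show ?thesis using p walk_Cons2 by auto
qed

lemma twin_dist_le:
  assumes tw: "twins V E a b" and ab: "a \<noteq> b" and V: "a \<in> V" "b \<in> V" "w \<in> V"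
    and wa: "w \<noteq> a" and wb: "w \<noteq> b"
  shows "dist V E b w \<le> dist V E a w"
proof -
  obtain p where p: "walk V E p" "hd p = a" "last p = w" "length p = Suc (dist V E a w)"
    using dist_witness V by blast
  obtain x r where px: "p = a # x # r"
    using p wa by (cases p; cases "tl p") auto
  have wq: "walk V E (x # r)" and ax: "E a x" using p(1) px walk_Cons2 by auto
  have lq: "last (x # r) = w" using p(3) px by simp
  have len: "length (x # r) = dist V E a w" using p(4) px by simp
  show ?thesis
  proof (cases "x = b")
    case True
    have "dist V E b w \<le> length r" using dist_le[OF wq, of b w "length r"] True lq by simp
    then show ?thesis using len by simp
  next
    case False
    have "x \<in> nbhd V E a - {b}" using ax False EV2 by (auto simp: nbhd_def)
    then have "x \<in> nbhd V E b - {a}" using tw unfolding twins_def by blast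
    then have "E b x" by (simp add: nbhd_def)
    then have "walk V E (b # x # r)" using wq V walk_Cons2 by auto
    then show ?thesis using dist_le[of "b # x # r" b w "dist V E a w"] lq len by simp
  qed
qed

lemma twin_sym: "twins V E a b \<Longrightarrow> twins V E b a" by (simp add: twins_def)

lemma twin_dist_eq:
  assumes "twins V E a b" "a \<noteq> b" "a \<in> V" "b \<in> V" "w \<in> V" "w \<noteq> a" "w \<noteq> b"
  shows "dist V E a w = dist V E b w"
proof -
  have "dist V E b w \<le> dist V E a w" by (rule twin_dist_le[OF assms])
  moreover have "dist V E a w \<le> dist V E b w"
    by (rule twin_dist_le[OF twin_sym[OF assms(1)]]) (use assms in auto)
  ultimately show ?thesis by simp
qed

lemma exit_edge:
  assumes "walk V E p" "hd p \<in> S" "last p \<notin> S"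
  shows "\<exists>a b. a \<in> S \<and> b \<notin> S \<and> E a b"
  using assms
proof (induction p)
  case Nil then show ?case by (simp add: walk_def)
next
  case (Cons x r)
  show ?case
  proof (cases r)
    case Nil then show ?thesis using Cons by simp
  next
    case (Cons y r')
    have w: "E x y" "walk V E (y # r')" using Cons.prems(1) Cons walk_Cons2 by auto
    show ?thesis
    proof (cases "y \<in> S")
      case True
      then show ?thesis using Cons.IH w Cons.prems Cons by auto
    next
      case False then show ?thesis using w Cons.prems by auto
    qed
  qed
qed

lemma cut_edge:
  assumes "S \<subseteq> V" "u \<in> S" "v \<in> V" "v \<notin> S"
  shows "\<exists>a b. a \<in> S \<and> b \<in> V - S \<and> E a b"
proof -
  obtain p where "walk V E p" "hd p = u" "last p = v" using walk_exists assms by blast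
  then obtain a b where "a \<in> S" "b \<notin> S" "E a b" using exit_edge[of p S] assms by blast
  then show ?thesis using EV2 by blast
qed

end


context sg begin

lemma dist_set_0: assumes "S \<subseteq> V" "finite S" "u \<in> S" shows "dist_set V E u S = 0"
proof -
  have "dist V E u u = 0" using dist_self assms by auto
  then have "Min ((\<lambda>w. dist V E u w) ` S) \<le> 0" using assms by (intro Min_le_iff[THEN iffD2]) force+
  then show ?thesis by (simp add: dist_set_def)
qed

lemma dist_set_le: assumes "finite S" "w \<in> S" shows "dist_set V E u S \<le> dist V E u w"
  unfolding dist_set_def using assms by (intro Min_le) auto

lemma dist_set_ge1: assumes "S \<subseteq> V" "finite S" "S \<noteq> {}" "u \<in> V" "u \<notin> S"
  shows "dist_set V E u S \<ge> 1"
proof -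
  have "Min ((\<lambda>w. dist V E u w) ` S) \<in> (\<lambda>w. dist V E u w) ` S" using assms by (intro Min_in) auto
  then obtain w where "w \<in> S" "dist_set V E u S = dist V E u w" by (auto simp: dist_set_def)
  then show ?thesis using dist_pos[of u w] assms by (metis in_mono less_one linorder_not_less)
qed

lemma dist_set_single: "dist_set V E u {w} = dist V E u w"
  by (simp add: dist_set_def)

lemma part_sub: "partition_on V P \<Longrightarrow> S \<in> P \<Longrightarrow> S \<subseteq> V"
  by (auto simp: partition_on_def)
lemma part_fin: "partition_on V P \<Longrightarrow> S \<in> P \<Longrightarrow> finite S"
  using part_sub finV finite_subset by blast
lemma part_ne: "partition_on V P \<Longrightarrow> S \<in> P \<Longrightarrow> S \<noteq> {}"
  by (auto simp: partition_on_def)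
lemma part_ex: "partition_on V P \<Longrightarrow> u \<in> V \<Longrightarrow> \<exists>S\<in>P. u \<in> S"
  by (auto simp: partition_on_def)
lemma part_uniq: "partition_on V P \<Longrightarrow> S \<in> P \<Longrightarrow> S' \<in> P \<Longrightarrow> u \<in> S \<Longrightarrow> u \<in> S' \<Longrightarrow> S = S'"
  by (auto simp: partition_on_def pairwise_def disjnt_def)
lemma part_finP: "partition_on V P \<Longrightarrow> finite P"
  using finV by (metis finite_UnionD partition_onD1)

lemma rep_neq: assumes "locating_partition V E P" "u \<in> V" "v \<in> V" "u \<noteq> v"
    "\<And>S. S \<in> P \<Longrightarrow> dist_set V E u S = dist_set V E v S"
  shows False
proof -
  have "rep V E P u = rep V E P v" unfolding rep_def using assms(5) by (intro restrict_ext) auto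
  then show False using assms(1-4) by (auto simp: locating_partition_def)
qed

lemma locating_from_resolvers:
  assumes P: "partition_on V P"
    and res: "\<And>S u v. S \<in> P \<Longrightarrow> u \<in> S \<Longrightarrow> v \<in> S \<Longrightarrow> u \<noteq> v \<Longrightarrow> \<exists>w. {w} \<in> P \<and> ((E u w \<and> \<not> E v w) \<or> (E v w \<and> \<not> E u w))"
  shows "locating_partition V E P"
  unfolding locating_partition_def
proof (intro conjI ballI impI P)
  fix u v assume u: "u \<in> V" and v: "v \<in> V" and uv: "u \<noteq> v"
  obtain S where S: "S \<in> P" "u \<in> S" using part_ex P u by blast
  show "rep V E P u \<noteq> rep V E P v"
  proof (cases "v \<in> S")
    case False
    have "dist_set V E u S = 0" using dist_set_0 part_sub[OF P S(1)] part_fin[OF P S(1)] S by blast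
    moreover have "dist_set V E v S \<ge> 1" using dist_set_ge1 part_sub[OF P S(1)] part_fin[OF P S(1)] part_ne[OF P S(1)] v False by blast
    ultimately have "rep V E P u S \<noteq> rep V E P v S" using S by (simp add: rep_def)
    then show ?thesis by metis
  next
    case True
    have "\<exists>w. {w} \<in> P \<and> ((E u w \<and> \<not> E v w) \<or> (E v w \<and> \<not> E u w))"
      using res[OF S(1) S(2) \<open>v \<in> S\<close> uv] by blast
    then obtain w where w: "{w} \<in> P" "(E u w \<and> \<not> E v w) \<or> (E v w \<and> \<not> E u w)" by blast
    have wV: "w \<in> V" using part_sub[OF P w(1)] by auto
    have "dist V E u w \<noteq> dist V E v w"
      using w(2) dist_adj dist_one[OF u wV] dist_one[OF v wV] by force
    then have "rep V E P u {w} \<noteq> rep V E P v {w}" using w(1) by (simp add: rep_def dist_set_single)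
    then show ?thesis by metis
  qed
qed

lemma twins_separated:
  assumes L: "locating_partition V E P" and S: "S \<in> P" "a \<in> S" "b \<in> S"
    and ab: "a \<noteq> b" "twins V E a b"
  shows False
proof -
  have P: "partition_on V P" using L by (simp add: locating_partition_def)
  have abV: "a \<in> V" "b \<in> V" using part_sub[OF P S(1)] S by auto
  show False
  proof (rule rep_neq[OF L abV ab(1)])
    fix T assume T: "T \<in> P"
    show "dist_set V E a T = dist_set V E b T"
    proof (cases "T = S")
      case True then show ?thesis using dist_set_0 part_sub[OF P S(1)] part_fin[OF P S(1)] S by simp
    next
      case False
      then have "a \<notin> T" "b \<notin> T" using part_uniq[OF P T S(1)] S by auto
      then have "(\<lambda>w. dist V E a w) ` T = (\<lambda>w. dist V E b w) ` T"
        using twin_dist_eq[OF ab(2) ab(1) abV] part_sub[OF P T] by (intro image_cong) auto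
      then show ?thesis by (simp add: dist_set_def)
    qed
  qed
qed

definition partof :: "'a set set \<Rightarrow> 'a \<Rightarrow> 'a set" where
  "partof P u = (SOME S. S \<in> P \<and> u \<in> S)"

lemma partof: "partition_on V P \<Longrightarrow> u \<in> V \<Longrightarrow> partof P u \<in> P \<and> u \<in> partof P u"
  unfolding partof_def using part_ex by (metis (mono_tags, lifting) someI_ex)

lemma twins_inj:
  assumes L: "locating_partition V E P" and W: "W \<subseteq> V" "\<And>u v. u \<in> W \<Longrightarrow> v \<in> W \<Longrightarrow> twins V E u v"
  shows "inj_on (partof P) W" "partof P ` W \<subseteq> P" "card W \<le> card P"
proof -
  have P: "partition_on V P" using L by (simp add: locating_partition_def)
  show inj: "inj_on (partof P) W"
  proof (rule inj_onI)
    fix a b assume a: "a \<in> W" and b: "b \<in> W" and e: "partof P a = partof P b"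
    show "a = b"
    proof (rule ccontr)
      assume "a \<noteq> b"
      moreover have "partof P a \<in> P" "a \<in> partof P a" "b \<in> partof P a"
        using partof[OF P, of a] partof[OF P, of b] a b W(1) e by auto
      moreover have "twins V E a b" using W(2) a b by blast
      ultimately show False using twins_separated[OF L] by blast
    qed
  qed
  show sub: "partof P ` W \<subseteq> P" using partof[OF P] W by auto
  show "card W \<le> card P"
    using card_inj_on_le[OF inj sub part_finP[OF P]] .
qed

end


context sg begin

lemma singletons_locating: "locating_partition V E ((\<lambda>x. {x}) ` V)"
  by (rule locating_from_resolvers) (auto simp: partition_on_singletons)

lemma pd_le: "locating_partition V E P \<Longrightarrow> partition_dimension V E \<le> card P"
  unfolding partition_dimension_def by (rule Least_le) blast

lemma pd_attained: "\<exists>P. locating_partition V E P \<and> card P = partition_dimension V E"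
proof -
  have "\<exists>k P. locating_partition V E P \<and> card P = k" using singletons_locating by blast
  then show ?thesis unfolding partition_dimension_def by (rule LeastI_ex)
qed

lemma pair_partition:
  assumes a: "a \<in> V" and b: "b \<in> V" and ab: "a \<noteq> b" and r: "r \<in> V" "r \<noteq> a" "r \<noteq> b"
    and e: "E r a" "\<not> E r b"
  shows "\<exists>P. locating_partition V E P \<and> card P = card V - 1"
proof -
  define P where "P = {{a,b}} \<union> (\<lambda>x. {x}) ` (V - {a,b})"
  have part: "partition_on V P"
    unfolding P_def by (rule partition_onI) (use a b in \<open>auto simp: disjnt_def\<close>)
  have loc: "locating_partition V E P"
  proof (rule locating_from_resolvers[OF part])
    fix S u v assume S: "S \<in> P" "u \<in> S" "v \<in> S" "u \<noteq> v"
    then have "S = {a,b}" unfolding P_def by auto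
    then have uv: "(u = a \<and> v = b) \<or> (u = b \<and> v = a)" using S by blast
    have "{r} \<in> P" using r unfolding P_def by auto
    moreover have "E a r" "\<not> E b r" using e Esym by blast+
    ultimately show "\<exists>w. {w} \<in> P \<and> ((E u w \<and> \<not> E v w) \<or> (E v w \<and> \<not> E u w))"
      using uv by blast
  qed
  have ci: "card ((\<lambda>x. {x}) ` (V - {a,b})) = card (V - {a,b})"
    by (rule card_image) (simp add: inj_on_def)
  have dj: "{{a,b}} \<inter> (\<lambda>x. {x}) ` (V - {a,b}) = {}" using ab by auto
  have "card P = card {{a,b}} + card ((\<lambda>x. {x}) ` (V - {a,b}))"
    unfolding P_def by (rule card_Un_disjoint) (use finV dj in auto)
  then have "card P = 1 + card (V - {a,b})" using ci by simp
  also have "card (V - {a,b}) = card V - 2" using a b ab finV by (simp add: card_Diff_subset)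
  finally have c: "card P = 1 + (card V - 2)" .
  have "card {a,b} = 2" using ab by simp
  moreover have "{a,b} \<subseteq> V" using a b by auto
  ultimately have "card V \<ge> 2" using card_mono[OF finV, of "{a,b}"] by simp
  then have "card P = card V - 1" using c by simp
  then show ?thesis using loc by blast
qed

definition config :: bool where
  "config \<longleftrightarrow> (\<exists>a1 b1 a2 b2 r1 r2. a1 \<in> V \<and> b1 \<in> V \<and> a2 \<in> V \<and> b2 \<in> V \<and> distinct [a1,b1,a2,b2]
     \<and> r1 \<in> V \<and> r2 \<in> V \<and> r1 \<notin> {a1,b1,a2,b2} \<and> r2 \<notin> {a1,b1,a2,b2}
     \<and> E r1 a1 \<and> \<not> E r1 b1 \<and> E r2 a2 \<and> \<not> E r2 b2)"

lemma config_partition: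
  assumes config
  shows "\<exists>P. locating_partition V E P \<and> card P = card V - 2"
proof -
  obtain a1 b1 a2 b2 r1 r2 where h: "a1 \<in> V" "b1 \<in> V" "a2 \<in> V" "b2 \<in> V" "distinct [a1,b1,a2,b2]"
     "r1 \<in> V" "r2 \<in> V" "r1 \<notin> {a1,b1,a2,b2}" "r2 \<notin> {a1,b1,a2,b2}"
     "E r1 a1" "\<not> E r1 b1" "E r2 a2" "\<not> E r2 b2"
    using assms unfolding config_def by blast
  define P where "P = {{a1,b1},{a2,b2}} \<union> (\<lambda>x. {x}) ` (V - {a1,b1,a2,b2})"
  have part: "partition_on V P"
    unfolding P_def by (rule partition_onI) (use h in \<open>auto simp: disjnt_def\<close>)
  have loc: "locating_partition V E P"
  proof (rule locating_from_resolvers[OF part])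
    fix S u v assume S: "S \<in> P" "u \<in> S" "v \<in> S" "u \<noteq> v"
    then have "S = {a1,b1} \<or> S = {a2,b2}" unfolding P_def by auto

    have "{r1} \<in> P" "{r2} \<in> P" using h unfolding P_def by auto
    have e: "E a1 r1" "\<not> E b1 r1" "E a2 r2" "\<not> E b2 r2" using h(10-13) Esym by blast+
    show "\<exists>w. {w} \<in> P \<and> ((E u w \<and> \<not> E v w) \<or> (E v w \<and> \<not> E u w))"
    proof (cases "S = {a1,b1}")
      case True
      then have "(u = a1 \<and> v = b1) \<or> (u = b1 \<and> v = a1)" using S by auto
      then show ?thesis using e \<open>{r1} \<in> P\<close> by blast
    next
      case False
      then have "S = {a2,b2}" using \<open>S = {a1,b1} \<or> S = {a2,b2}\<close> by blast
      then have "(u = a2 \<and> v = b2) \<or> (u = b2 \<and> v = a2)" using S by auto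
      then show ?thesis using e \<open>{r2} \<in> P\<close> by blast
    qed
  qed
  have d: "{a1,b1} \<noteq> {a2,b2}" using h(5) by (auto simp: doubleton_eq_iff)
  have ci: "card ((\<lambda>x. {x}) ` (V - {a1,b1,a2,b2})) = card (V - {a1,b1,a2,b2})"
    by (rule card_image) (simp add: inj_on_def)
  have dj: "{{a1,b1},{a2,b2}} \<inter> (\<lambda>x. {x}) ` (V - {a1,b1,a2,b2}) = {}" using h(5) by auto
  have "card P = card {{a1,b1},{a2,b2}} + card ((\<lambda>x. {x}) ` (V - {a1,b1,a2,b2}))"
    unfolding P_def by (rule card_Un_disjoint) (use finV dj in auto)
  then have "card P = 2 + card (V - {a1,b1,a2,b2})" using ci d by simp
  also have "card (V - {a1,b1,a2,b2}) = card V - 4" using h finV by (simp add: card_Diff_subset)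
  finally have "card P = card V - 2"
  proof -
    assume c: "card P = 2 + (card V - 4)"
    have "card {a1,b1,a2,b2} = 4" using h(5) by simp
    moreover have "{a1,b1,a2,b2} \<subseteq> V" using h by auto
    ultimately have "card V \<ge> 4" using card_mono[OF finV, of "{a1,b1,a2,b2}"] by simp
    then show ?thesis using c by simp
  qed
  then show ?thesis using loc by blast
qed

end


context sg begin

lemma avoid5:
  assumes "card V \<ge> 9"
  shows "\<exists>x\<in>V. x \<notin> {a,b,c,d,e}"
proof (rule ccontr)
  assume "\<not> ?thesis"
  then have "V \<subseteq> set [a,b,c,d,e]" by auto
  then have "card V \<le> card (set [a,b,c,d,e])" by (intro card_mono) auto
  also have "\<dots> \<le> 5" using card_length[of "[a,b,c,d,e]"] by simp
  finally show False using assms by simp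
qed

lemma has_nbr: assumes "card V \<ge> 9" "u \<in> V" shows "\<exists>w. E u w"
proof -
  obtain v where v: "v \<in> V" "v \<notin> {u,u,u,u,u}" using avoid5[OF assms(1)] by blast
  obtain a b where "a \<in> {u}" "b \<in> V - {u}" "E a b" using cut_edge[of "{u}" u v] v assms by auto
  then show ?thesis by auto
qed

lemma G1:
  assumes nc: "\<not> config" and r: "r \<in> V" and a: "E r a1" "E r a2" "a1 \<noteq> a2"
    and b: "b1 \<in> V" "b2 \<in> V" "b1 \<noteq> b2" "\<not> E r b1" "\<not> E r b2" "b1 \<noteq> r" "b2 \<noteq> r"
  shows False
proof -
  have "a1 \<in> V" "a2 \<in> V" "a1 \<noteq> r" "a2 \<noteq> r" using a EV2 Eirr by auto
  moreover have "a1 \<noteq> b1" "a1 \<noteq> b2" "a2 \<noteq> b1" "a2 \<noteq> b2" using a b by auto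
  ultimately have config unfolding config_def
    by (intro exI[of _ a1] exI[of _ b1] exI[of _ a2] exI[of _ b2] exI[of _ r] exI[of _ r])
      (use a b r in auto)
  then show False using nc by simp
qed

lemma G2:
  assumes nc: "\<not> config" and n9: "card V \<ge> 9" and r: "r \<in> V" and b: "b \<in> V" "b \<noteq> r" "\<not> E r b"
    and rb: "\<And>v. v \<in> V \<Longrightarrow> v \<noteq> r \<Longrightarrow> v \<noteq> b \<Longrightarrow> E r v"
    and cds: "c \<in> V" "d \<in> V" "s \<in> V" "c \<noteq> d" "c \<noteq> s" "d \<noteq> s"
      "c \<notin> {r,b}" "d \<notin> {r,b}" "s \<notin> {r,b}" "E s c" "\<not> E s d"
  shows False
proof -
  obtain x where x: "x \<in> V" "x \<notin> {r,b,c,d,s}" using avoid5[OF n9] by blast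
  have "E r x" using rb x by auto
  then show False using nc unfolding config_def
    apply (simp only: not_ex)
    apply (erule allE[of _ x], erule allE[of _ b], erule allE[of _ c], erule allE[of _ d],
           erule allE[of _ r], erule allE[of _ s])
    using x b cds r by auto
qed

lemma G3:
  assumes nc: "\<not> config" and n9: "card V \<ge> 9" and r: "r \<in> V" and p: "\<And>w. E r w \<longleftrightarrow> w = p"
    and cds: "c \<in> V" "d \<in> V" "s \<in> V" "c \<noteq> d" "c \<noteq> s" "d \<noteq> s"
      "c \<notin> {r,p}" "d \<notin> {r,p}" "s \<notin> {r,p}" "E s c" "\<not> E s d"
  shows False
proof -
  obtain x where x: "x \<in> V" "x \<notin> {r,p,c,d,s}" using avoid5[OF n9] by blast
  have pV: "p \<in> V" using p EV2 by blast
  have "\<not> E r x" using p x by auto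
  then show False using nc unfolding config_def
    apply (simp only: not_ex)
    apply (erule allE[of _ p], erule allE[of _ x], erule allE[of _ c], erule allE[of _ d],
           erule allE[of _ r], erule allE[of _ s])
    using x pV p[of p] cds r Eirr[of r] by auto
qed

lemma homog:
  assumes X: "X \<subseteq> V" "card X \<ge> 5"
    and h: "\<And>c d s. c \<in> X \<Longrightarrow> d \<in> X \<Longrightarrow> s \<in> X \<Longrightarrow> c \<noteq> d \<Longrightarrow> c \<noteq> s \<Longrightarrow> d \<noteq> s \<Longrightarrow> E s c = E s d"
  shows "(\<forall>c\<in>X. \<forall>d\<in>X. c \<noteq> d \<longrightarrow> E c d) \<or> (\<forall>c\<in>X. \<forall>d\<in>X. c \<noteq> d \<longrightarrow> \<not> E c d)"
proof -
  have fX: "finite X" using X finV finite_subset by blast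
  have av: "\<exists>e\<in>X. e \<notin> {a,b,c,d}" for a b c d
  proof (rule ccontr)
    assume "\<not> ?thesis"
    then have "X \<subseteq> set [a,b,c,d]" by auto
    then have "card X \<le> card (set [a,b,c,d])" by (intro card_mono) auto
    also have "\<dots> \<le> 4" using card_length[of "[a,b,c,d]"] by simp
    finally show False using X by simp
  qed
  have key: "E c d = E c0 d0" if "c \<in> X" "d \<in> X" "c0 \<in> X" "d0 \<in> X" "c \<noteq> d" "c0 \<noteq> d0" for c d c0 d0
  proof -
    obtain e where e: "e \<in> X" "e \<notin> {c,d,c0,d0}" using av by blast
    have 1: "E c d = E c e" using h[of d e c] that e by auto
    have 2: "E e c = E e c0" using h[of c c0 e] that e by (cases "c = c0") auto
    have 3: "E c0 e = E c0 d0" using h[of e d0 c0] that e by auto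
    show ?thesis using 1 2 3 Ecomm by metis
  qed
  show ?thesis
  proof (cases "\<exists>c0\<in>X. \<exists>d0\<in>X. c0 \<noteq> d0 \<and> E c0 d0")
    case True
    then obtain c0 d0 where cd: "c0 \<in> X" "d0 \<in> X" "c0 \<noteq> d0" "E c0 d0" by blast
    have "\<forall>c\<in>X. \<forall>d\<in>X. c \<noteq> d \<longrightarrow> E c d"
    proof (intro ballI impI)
      fix c d assume "c \<in> X" "d \<in> X" "c \<noteq> d"
      then show "E c d" using key[of c d c0 d0] cd by blast
    qed
    then show ?thesis by blast
  next
    case False then show ?thesis by blast
  qed
qed

definition star :: bool where
  "star \<longleftrightarrow> (\<exists>p\<in>V. \<forall>v\<in>V. v \<noteq> p \<longrightarrow> (\<forall>w. E v w \<longleftrightarrow> w = p))"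
definition S2 :: bool where
  "S2 \<longleftrightarrow> (\<exists>r b. r \<in> V \<and> b \<in> V \<and> r \<noteq> b \<and> \<not> E r b \<and> (\<forall>x\<in>V-{r,b}. \<forall>y\<in>V. y \<noteq> x \<longrightarrow> E x y))"
definition S3 :: bool where
  "S3 \<longleftrightarrow> (\<exists>p b. p \<in> V \<and> b \<in> V \<and> p \<noteq> b \<and> (\<forall>y\<in>V. y \<noteq> p \<longrightarrow> E p y) \<and> (\<forall>w. E b w \<longleftrightarrow> w = p)
      \<and> (\<forall>x\<in>V-{p,b}. \<forall>y\<in>V-{p,b}. x \<noteq> y \<longrightarrow> E x y))"

end


context sg begin

lemma card_X: assumes "card V \<ge> 9" shows "card (V - {a,b}) \<ge> 5"
proof -
  have "card V - card {a,b} \<le> card (V - {a,b})" by (rule diff_card_le_card_Diff) simp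
  moreover have "card {a,b} \<le> 2" by (simp add: card_insert_if)
  ultimately show ?thesis using assms by linarith
qed

lemma S3I: "p \<in> V \<Longrightarrow> b \<in> V \<Longrightarrow> p \<noteq> b \<Longrightarrow> (\<And>y. y \<in> V \<Longrightarrow> y \<noteq> p \<Longrightarrow> E p y) \<Longrightarrow>
  (\<And>w. E b w \<longleftrightarrow> w = p) \<Longrightarrow> (\<And>x y. x \<in> V - {p,b} \<Longrightarrow> y \<in> V - {p,b} \<Longrightarrow> x \<noteq> y \<Longrightarrow> E x y) \<Longrightarrow> S3"
  unfolding S3_def by blast

lemma S2I: "r \<in> V \<Longrightarrow> b \<in> V \<Longrightarrow> r \<noteq> b \<Longrightarrow> \<not> E r b \<Longrightarrow>
  (\<And>x y. x \<in> V - {r,b} \<Longrightarrow> y \<in> V \<Longrightarrow> y \<noteq> x \<Longrightarrow> E x y) \<Longrightarrow> S2"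
  unfolding S2_def by blast

lemma starI: "p \<in> V \<Longrightarrow> (\<And>v w. v \<in> V \<Longrightarrow> v \<noteq> p \<Longrightarrow> E v w \<longleftrightarrow> w = p) \<Longrightarrow> star"
  unfolding star_def by blast

lemma graph_structure:
  assumes nc: "\<not> config" and n9: "card V \<ge> 9" and r: "r \<in> V" and b0: "b0 \<in> V" "b0 \<noteq> r" "\<not> E r b0"
  shows "star \<or> S2 \<or> S3"
proof -
  obtain p0 where p0: "E r p0" using has_nbr[OF n9 r] by blast
  have p0V: "p0 \<in> V" "p0 \<noteq> r" using p0 EV2 Eirr by auto
  show ?thesis
  proof (cases "\<exists>b1 b2. b1\<in>V \<and> b2\<in>V \<and> b1\<noteq>b2 \<and> \<not> E r b1 \<and> \<not> E r b2 \<and> b1\<noteq>r \<and> b2\<noteq>r")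
    case True
    then obtain b1 b2 where bb: "b1\<in>V" "b2\<in>V" "b1\<noteq>b2" "\<not> E r b1" "\<not> E r b2" "b1\<noteq>r" "b2\<noteq>r" by blast
    have Nr: "E r w \<longleftrightarrow> w = p0" for w
      using G1[OF nc r p0 _ _ bb, of w] p0 by blast
    define X where "X = V - {r,p0}"
    have HX: "(\<forall>c\<in>X. \<forall>d\<in>X. c \<noteq> d \<longrightarrow> E c d) \<or> (\<forall>c\<in>X. \<forall>d\<in>X. c \<noteq> d \<longrightarrow> \<not> E c d)"
    proof (rule homog)
      show "X \<subseteq> V" "card X \<ge> 5" using card_X[OF n9] by (auto simp: X_def)
      fix c d s assume "c \<in> X" "d \<in> X" "s \<in> X" "c \<noteq> d" "c \<noteq> s" "d \<noteq> s"
      then show "E s c = E s d" using G3[OF nc n9 r Nr, of c d s] G3[OF nc n9 r Nr, of d c s]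
        by (auto simp: X_def)
    qed
    then show ?thesis
    proof
      assume cl: "\<forall>c\<in>X. \<forall>d\<in>X. c \<noteq> d \<longrightarrow> E c d"
      have xp: "E x p0" if x: "x \<in> X" for x
      proof (rule ccontr)
        assume nx: "\<not> E x p0"
        obtain a1 where a1: "a1 \<in> V" "a1 \<notin> {r,p0,x,x,x}" using avoid5[OF n9] by blast
        obtain a2 where a2: "a2 \<in> V" "a2 \<notin> {r,p0,x,a1,a1}" using avoid5[OF n9] by blast
        have "E x a1" "E x a2" using cl x a1 a2 by (auto simp: X_def)
        moreover have "\<not> E x r"
        proof
          assume "E x r" then have "E r x" by (rule Esym)
          then show False using Nr x by (auto simp: X_def)
        qed
        ultimately show False using G1[OF nc _ _ _ _ r p0V(1) _ _ nx] x a1 a2 p0V by (auto simp: X_def)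
      qed
      have "S3"
      proof (rule S3I[of p0 r])
        show "p0 \<in> V" "r \<in> V" "p0 \<noteq> r" using p0V r by auto
      next
        fix y assume "y \<in> V" "y \<noteq> p0"
        then show "E p0 y"
        proof (cases "y = r")
          case True then show ?thesis using Esym[OF p0] by simp
        next
          case False then have "y \<in> X" using \<open>y \<in> V\<close> \<open>y \<noteq> p0\<close> by (auto simp: X_def)
          then show ?thesis using Esym[OF xp] by blast
        qed
      next
        fix w show "E r w \<longleftrightarrow> w = p0" by (rule Nr)
      next
        fix x y assume "x \<in> V - {p0, r}" "y \<in> V - {p0, r}" "x \<noteq> y"
        then show "E x y" using cl by (auto simp: X_def)
      qed
      then show ?thesis by simp
    next
      assume ind: "\<forall>c\<in>X. \<forall>d\<in>X. c \<noteq> d \<longrightarrow> \<not> E c d"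
      have "star"
      proof (rule starI[of p0])
        show "p0 \<in> V" using p0V by simp
      next
        fix v w assume v: "v \<in> V" "v \<noteq> p0"
        show "E v w \<longleftrightarrow> w = p0"
        proof (cases "v = r")
          case True then show ?thesis using Nr by simp
        next
          case False
          then have vX: "v \<in> X" using v by (auto simp: X_def)
          have nb: "u = p0" if vu: "E v u" for u
          proof (rule ccontr)
            assume up: "u \<noteq> p0"
            have uV: "u \<in> V" "u \<noteq> v" using vu EV2 Eirr by auto
            have "u \<noteq> r" using vu Esym Nr v(2) by auto
            then have "u \<in> X" using uV up by (auto simp: X_def)
            then have "\<not> E v u" using ind vX uV(2) by auto
            then show False using vu by simp
          qed
          obtain u where "E v u" using has_nbr[OF n9 v(1)] by blast
          then show ?thesis using nb by auto
        qed
      qed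
      then show ?thesis by simp
    qed
  next
    case False
    define b where "b = b0"
    have rb: "E r v" if "v \<in> V" "v \<noteq> r" "v \<noteq> b" for v
      using False b0 that unfolding b_def by blast
    have bV: "b \<in> V" "b \<noteq> r" "\<not> E r b" using b0 by (auto simp: b_def)
    define X where "X = V - {r,b}"
    have HX: "(\<forall>c\<in>X. \<forall>d\<in>X. c \<noteq> d \<longrightarrow> E c d) \<or> (\<forall>c\<in>X. \<forall>d\<in>X. c \<noteq> d \<longrightarrow> \<not> E c d)"
    proof (rule homog)
      show "X \<subseteq> V" "card X \<ge> 5" using card_X[OF n9] by (auto simp: X_def)
      fix c d s assume "c \<in> X" "d \<in> X" "s \<in> X" "c \<noteq> d" "c \<noteq> s" "d \<noteq> s"
      then show "E s c = E s d" using G2[OF nc n9 r bV rb, of c d s] G2[OF nc n9 r bV rb, of d c s]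
        by (auto simp: X_def)
    qed
    have br: "\<not> E b r"
    proof
      assume "E b r" then have "E r b" by (rule Esym)
      then show False using bV by simp
    qed
    show ?thesis
    proof (cases "\<exists>b'\<in>V. b' \<noteq> b \<and> b' \<noteq> r \<and> \<not> E b b'")
      case False
      then have ball: "E b x" if "x \<in> X" for x using that by (auto simp: X_def)
      from HX show ?thesis
      proof
        assume cl: "\<forall>c\<in>X. \<forall>d\<in>X. c \<noteq> d \<longrightarrow> E c d"
        have "S2"
        proof (rule S2I[of r b])
          show "r \<in> V" "b \<in> V" "r \<noteq> b" "\<not> E r b" using r bV by auto
        next
          fix x y assume x: "x \<in> V - {r,b}" and y: "y \<in> V" "y \<noteq> x"
          show "E x y"
          proof -
            have "y = r \<or> y = b \<or> y \<in> X" using y by (auto simp: X_def)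
            then show ?thesis
            proof (elim disjE)
              assume "y = r" then show ?thesis using Esym[OF rb[of x]] x by auto
            next
              assume "y = b" then show ?thesis using Esym[OF ball[of x]] x by (auto simp: X_def)
            next
              assume "y \<in> X" then show ?thesis using cl x y by (auto simp: X_def)
            qed
          qed
        qed
        then show ?thesis by simp
      next
        assume ind: "\<forall>c\<in>X. \<forall>d\<in>X. c \<noteq> d \<longrightarrow> \<not> E c d"
        obtain c where c: "c \<in> V" "c \<notin> {r,b,b,b,b}" using avoid5[OF n9] by blast
        obtain d where d: "d \<in> V" "d \<notin> {r,b,c,c,c}" using avoid5[OF n9] by blast
        obtain e where e: "e \<in> V" "e \<notin> {r,b,c,d,d}" using avoid5[OF n9] by blast
        have "E c r" using Esym[OF rb[of c]] c by auto
        moreover have "E c b" using Esym[OF ball[of c]] c by (auto simp: X_def)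
        moreover have "\<not> E c d" "\<not> E c e" using ind c d e by (auto simp: X_def)
        ultimately show ?thesis using G1[OF nc c(1), of r b d e] bV c d e by auto
      qed
    next
      case True
      then obtain b' where b': "b' \<in> V" "b' \<noteq> b" "b' \<noteq> r" "\<not> E b b'" by blast
      obtain p where bp: "E b p" using has_nbr[OF n9 bV(1)] by blast
      have Nb: "E b w \<longleftrightarrow> w = p" for w
        using G1[OF nc bV(1) bp, of w b' r] bp b' br r bV by auto
      have pX: "p \<in> X" "p \<in> V" using bp br EV2 Eirr by (auto simp: X_def)
      from HX show ?thesis
      proof
        assume cl: "\<forall>c\<in>X. \<forall>d\<in>X. c \<noteq> d \<longrightarrow> E c d"
        have "S3"
        proof (rule S3I[of p b])
          show "p \<in> V" "b \<in> V" "p \<noteq> b" using pX bV Eirr bp by auto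
        next
          fix y assume y: "y \<in> V" "y \<noteq> p"
          have "y = r \<or> y = b \<or> y \<in> X" using y by (auto simp: X_def)
          then show "E p y"
          proof (elim disjE)
            assume "y = r" then show ?thesis using Esym[OF rb[of p]] pX by (auto simp: X_def)
          next
            assume "y = b" then show ?thesis using Esym[OF bp] by simp
          next
            assume "y \<in> X" then show ?thesis using cl pX y by auto
          qed
        next
          fix w show "E b w \<longleftrightarrow> w = p" by (rule Nb)
        next
          fix x y assume x: "x \<in> V - {p,b}" and y: "y \<in> V - {p,b}" and xy: "x \<noteq> y"
          have "x = r \<or> x \<in> X" "y = r \<or> y \<in> X" using x y by (auto simp: X_def)
          then show "E x y"
          proof (elim disjE)
            assume "x = r" "y = r" then show ?thesis using xy by simp
          next
            assume "x = r" "y \<in> X" then show ?thesis using rb y by (auto simp: X_def)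
          next
            assume "x \<in> X" "y = r" then show ?thesis using Esym[OF rb[of x]] by (auto simp: X_def)
          next
            assume "x \<in> X" "y \<in> X" then show ?thesis using cl xy by auto
          qed
        qed
        then show ?thesis by simp
      next
        assume ind: "\<forall>c\<in>X. \<forall>d\<in>X. c \<noteq> d \<longrightarrow> \<not> E c d"
        obtain x where x: "x \<in> V" "x \<notin> {r,b,p,p,p}" using avoid5[OF n9] by blast
        obtain y where y: "y \<in> V" "y \<notin> {r,b,p,x,x}" using avoid5[OF n9] by blast
        have Nx: "E x w \<longleftrightarrow> w = r" for w
        proof
          assume "E x w"
          then have h0: "w \<in> V" "w \<noteq> x" using EV2 Eirr by auto
          have h1: "w \<noteq> b"
          proof
            assume "w = b" then have "E b x" using Esym[OF \<open>E x w\<close>] by simp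
            then show False using Nb x by auto
          qed
          show "w = r"
          proof (rule ccontr)
            assume "w \<noteq> r"
            then have h: "w \<in> V" "w \<noteq> x" "w \<noteq> b" "w \<noteq> r" using h0 h1 by auto
            then have "w \<in> X" "x \<in> X" using x by (auto simp: X_def)
            then have "\<not> E x w" using ind h(2) by auto
            then show False using \<open>E x w\<close> by simp
          qed
        next
          assume "w = r" then show "E x w" using Esym[OF rb[of x]] x by auto
        qed
        have "E p b" using Esym[OF bp] by simp
        moreover have "\<not> E p y" using ind pX y by (auto simp: X_def)
        ultimately show ?thesis
        proof -
          have "b \<noteq> p" using bp Eirr by auto
          moreover have "p \<noteq> r" using pX by (simp add: X_def)
          ultimately show ?thesis
            using G3[OF nc n9 x(1) Nx, of b y p] \<open>E p b\<close> \<open>\<not> E p y\<close> bV y pX x by auto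
        qed
      qed
    qed
  qed
qed

end


context sg begin

lemma twins_iff: "twins V E u v \<longleftrightarrow> (\<forall>w\<in>V. w \<noteq> u \<longrightarrow> w \<noteq> v \<longrightarrow> (E u w \<longleftrightarrow> E v w))"
proof
  assume "twins V E u v"
  then have eq: "nbhd V E u - {v} = nbhd V E v - {u}" by (simp add: twins_def)
  show "\<forall>w\<in>V. w \<noteq> u \<longrightarrow> w \<noteq> v \<longrightarrow> (E u w \<longleftrightarrow> E v w)"
  proof (intro ballI impI)
    fix w assume "w \<in> V" "w \<noteq> u" "w \<noteq> v"
    then show "E u w \<longleftrightarrow> E v w" using eq unfolding nbhd_def by blast
  qed
next
  assume h: "\<forall>w\<in>V. w \<noteq> u \<longrightarrow> w \<noteq> v \<longrightarrow> (E u w \<longleftrightarrow> E v w)"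
  show "twins V E u v" unfolding twins_def nbhd_def
  proof (rule set_eqI)
    fix w
    show "w \<in> {w \<in> V. E u w} - {v} \<longleftrightarrow> w \<in> {w \<in> V. E v w} - {u}"
    proof (cases "w = u \<or> w = v")
      case True then show ?thesis using Eirr[of u] Eirr[of v] by auto
    next
      case False then show ?thesis using h by auto
    qed
  qed
qed

lemma tn_ge: assumes "u \<in> V" "X \<subseteq> V" "\<And>x. x \<in> X \<Longrightarrow> twins V E u x"
  shows "card X \<le> twin_number V E"
proof -
  have "X \<subseteq> twin_class V E u" using assms by (auto simp: twin_class_def)
  then have "card X \<le> card (twin_class V E u)" using finV by (intro card_mono) (auto simp: twin_class_def)
  also have "\<dots> \<le> twin_number V E" unfolding twin_number_def using finV assms(1) by (intro Max_ge) auto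
  finally show ?thesis .
qed

lemma tau_props: assumes "tau_set V E W"
  shows "W \<subseteq> V" "\<And>u v. u \<in> W \<Longrightarrow> v \<in> W \<Longrightarrow> twins V E u v" "card W = twin_number V E"
  using assms by (auto simp: tau_set_def)

lemma tn_le: assumes "tau_set V E W" shows "twin_number V E \<le> card V"
  using tau_props(3)[OF assms] card_mono[OF finV tau_props(1)[OF assms]] by simp

lemma star_tn:
  assumes st: star and n9: "card V \<ge> 9" and W: "tau_set V E W"
  shows "twin_number V E = card V - 1"
proof -
  obtain p where p: "p \<in> V" "\<And>v w. v \<in> V \<Longrightarrow> v \<noteq> p \<Longrightarrow> E v w \<longleftrightarrow> w = p"
    using st unfolding star_def by blast
  obtain l where l: "l \<in> V" "l \<notin> {p,p,p,p,p}" using avoid5[OF n9] by blast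
  obtain l' where l': "l' \<in> V" "l' \<notin> {p,l,l,l,l}" using avoid5[OF n9] by blast
  have "card (V - {p}) \<le> twin_number V E"
  proof (rule tn_ge[OF l(1)])
    fix x assume "x \<in> V - {p}"
    then show "twins V E l x" unfolding twins_iff using p l by auto
  qed auto
  then have ge: "card V - 1 \<le> twin_number V E" using p finV by (simp add: card_Diff_singleton)
  have "twin_number V E \<noteq> card V"
  proof
    assume "twin_number V E = card V"
    then have "W = V" using card_subset_eq[OF finV tau_props(1)[OF W]] tau_props(3)[OF W] by simp
    then have "twins V E p l" using tau_props(2)[OF W] p l by auto
    moreover have "E p l'" using p(2)[OF l'(1), of p] l' Esym by auto
    moreover have "\<not> E l l'" using p(2)[OF l(1)] l l' by auto
    ultimately show False unfolding twins_iff using l l' by auto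
  qed
  then show ?thesis using ge tn_le[OF W] by linarith
qed

lemma clique_tn:
  assumes n9: "card V \<ge> 9" and W: "tau_set V E W" and a: "a1 \<in> V" "a2 \<in> V" "a1 \<noteq> a2"
    and cl: "\<And>x y. x \<in> V - {a1,a2} \<Longrightarrow> y \<in> V - {a1,a2} \<Longrightarrow> x \<noteq> y \<Longrightarrow> E x y"
    and tw: "\<And>x y. x \<in> V - {a1,a2} \<Longrightarrow> y \<in> V - {a1,a2} \<Longrightarrow> twins V E x y"
    and nt: "\<And>x a. x \<in> V - {a1,a2} \<Longrightarrow> a \<in> {a1,a2} \<Longrightarrow> \<not> twins V E a x"
  shows "twin_number V E = card V - 2 \<and> induced_complete V E W (card V - 2)"
proof -
  define X where "X = V - {a1,a2}"
  have cX: "card X = card V - 2" using a finV by (simp add: X_def card_Diff_subset)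
  obtain x0 where x0: "x0 \<in> V" "x0 \<notin> {a1,a2,a1,a1,a1}" using avoid5[OF n9] by blast
  have ge: "card X \<le> twin_number V E"
    using tn_ge[of x0 X] x0 tw by (auto simp: X_def)
  have WX: "W \<subseteq> X"
  proof (rule ccontr)
    assume "\<not> W \<subseteq> X"
    then obtain a where aW: "a \<in> W" "a \<in> {a1,a2}" using tau_props(1)[OF W] by (auto simp: X_def)
    have "W \<inter> X = {}" using nt tau_props(2)[OF W] aW by (auto simp: X_def)
    then have "W \<subseteq> {a1,a2}" using tau_props(1)[OF W] by (auto simp: X_def)
    then have "card W \<le> card {a1,a2}" by (intro card_mono) auto
    also have "\<dots> \<le> 2" by (simp add: card_insert_if)
    finally have "card W \<le> 2" .
    then show False using tau_props(3)[OF W] ge cX n9 by linarith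
  qed
  then have "card W \<le> card X" using finV by (intro card_mono) (auto simp: X_def)
  then have T: "twin_number V E = card V - 2" using ge cX tau_props(3)[OF W] by linarith
  moreover have "induced_complete V E W (card V - 2)"
    unfolding induced_complete_def
  proof (intro conjI ballI impI)
    show "W \<subseteq> V" "card W = card V - 2" using tau_props[OF W] T by auto
    fix u v assume "u \<in> W" "v \<in> W" "u \<noteq> v"
    then show "E u v" using cl WX unfolding X_def by blast
  qed
  ultimately show ?thesis by simp
qed

end


context sg begin

lemma nontwin_partition:
  assumes "a \<in> V" "b \<in> V" "\<not> twins V E a b"
  shows "\<exists>P. locating_partition V E P \<and> card P = card V - 1"
proof -
  obtain w where w: "w \<in> V" "w \<noteq> a" "w \<noteq> b" "E a w \<noteq> E b w" using assms(3) unfolding twins_iff by blast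
  have ab: "a \<noteq> b" using assms(3) by (auto simp: twins_def)
  show ?thesis
  proof (cases "E a w")
    case True
    then have "E w a" "\<not> E w b" using w(4) Esym by blast+
    then show ?thesis using pair_partition[OF assms(1,2) ab w(1-3)] by blast
  next
    case False
    then have "E w b" "\<not> E w a" using w(4) Esym by blast+
    then show ?thesis using pair_partition[OF assms(2,1) ab[symmetric] w(1) w(3) w(2)] by blast
  qed
qed

lemma exists_nontwin:
  assumes "twin_number V E < card V" "card V \<ge> 9"
  shows "\<exists>a\<in>V. \<exists>b\<in>V. \<not> twins V E a b"
proof (rule ccontr)
  assume nt: "\<not> (\<exists>a\<in>V. \<exists>b\<in>V. \<not> twins V E a b)"
  obtain u where u: "u \<in> V" using avoid5[OF assms(2)] by blast
  have "card V \<le> twin_number V E" using tn_ge[OF u(1), of V] nt u by blast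
  then show False using assms by simp
qed

lemma lower_clique:
  assumes n9: "card V \<ge> 9" and W: "tau_set V E W" and T: "twin_number V E = card V - 2"
    and ic: "induced_complete V E W (card V - 2)" and L: "locating_partition V E P"
  shows "card P \<ge> card V - 1"
proof (rule ccontr)
  assume nle: "\<not> card P \<ge> card V - 1"
  have P: "partition_on V P" using L by (simp add: locating_partition_def)
  note inj = twins_inj[OF L tau_props(1,2)[OF W]]
  have cP: "card P = card W" using inj(3) tau_props(3)[OF W] T nle n9 by linarith
  have img: "partof P ` W = P"
    using card_subset_eq[OF part_finP[OF P] inj(2)] card_image[OF inj(1)] cP by simp
  have cW: "card W = card V - 2" using tau_props(3)[OF W] T by simp
  have WV: "W \<subseteq> V" using tau_props(1)[OF W] .
  obtain v where v: "v \<in> V" "v \<notin> W"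
  proof -
    have "W \<noteq> V" using cW n9 by auto
    then show ?thesis using that WV by blast
  qed
  obtain w1 where w1: "w1 \<in> W"
  proof -
    have "W \<noteq> {}" using cW n9 by auto
    then show ?thesis using that by blast
  qed
  obtain a b where ab: "a \<in> W" "b \<in> V - W" "E a b" using cut_edge[OF WV w1 v] by blast
  have bW: "E w b" if "w \<in> W" for w
  proof (cases "w = a")
    case True then show ?thesis using ab by simp
  next
    case False
    have "twins V E a w" using tau_props(2)[OF W] ab(1) that by blast
    then show ?thesis using ab that unfolding twins_iff by auto
  qed
  have bV: "b \<in> V" "b \<notin> W" using ab by auto
  obtain S0 where S0: "S0 \<in> P" "b \<in> S0" using part_ex[OF P bV(1)] by blast
  then obtain w0 where w0: "w0 \<in> W" "S0 = partof P w0" using img by blast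
  have w0S: "w0 \<in> S0" using partof[OF P] w0 WV by auto
  show False
  proof (rule rep_neq[OF L bV(1), of w0])
    show "w0 \<in> V" "b \<noteq> w0" using w0 WV bV by auto
    fix S assume S: "S \<in> P"
    show "dist_set V E b S = dist_set V E w0 S"
    proof (cases "S = S0")
      case True
      then show ?thesis using dist_set_0 part_sub[OF P S] part_fin[OF P S] S0 w0S by simp
    next
      case False
      obtain w' where w': "w' \<in> W" "S = partof P w'" using img S by blast
      have w'S: "w' \<in> S" using partof[OF P] w' WV by auto
      have ne: "w' \<noteq> w0" using w' w0 False by auto
      have nb: "b \<notin> S" "w0 \<notin> S" using part_uniq[OF P S S0(1)] S0 w0S False by auto
      have d1: "dist_set V E b S = 1"
      proof -
        have "dist_set V E b S \<le> dist V E b w'" using dist_set_le[OF part_fin[OF P S] w'S] .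
        moreover have "dist V E b w' = 1" using dist_adj Esym[OF bW[OF w'(1)]] by auto
        moreover have "dist_set V E b S \<ge> 1"
          using dist_set_ge1 part_sub[OF P S] part_fin[OF P S] part_ne[OF P S] bV nb by blast
        ultimately show ?thesis by simp
      qed
      have d2: "dist_set V E w0 S = 1"
      proof -
        have "dist_set V E w0 S \<le> dist V E w0 w'" using dist_set_le[OF part_fin[OF P S] w'S] .
        moreover have "E w0 w'" using ic w' w0 ne by (auto simp: induced_complete_def)
        then have "dist V E w0 w' = 1" using dist_adj by auto
        moreover have "dist_set V E w0 S \<ge> 1"
          using dist_set_ge1 part_sub[OF P S] part_fin[OF P S] part_ne[OF P S] w0 WV nb by blast
        ultimately show ?thesis by simp
      qed
      show ?thesis using d1 d2 by simp
    qed
  qed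
qed

lemma main:
  assumes n9: "card V \<ge> 9" and W: "tau_set V E W"
  shows "partition_dimension V E = card V - 1 \<longleftrightarrow>
           (twin_number V E = card V - 1 \<or>
            (twin_number V E = card V - 2 \<and> induced_complete V E W (card V - 2)))"
proof
  assume pd: "partition_dimension V E = card V - 1"
  obtain P0 where P0: "locating_partition V E P0" "card P0 = card V - 1" using pd_attained pd by auto
  have "twin_number V E \<le> card P0" using twins_inj(3)[OF P0(1) tau_props(1,2)[OF W]] tau_props(3)[OF W] by simp
  then have Tlt: "twin_number V E < card V" using P0 n9 by linarith
  obtain a b where abn: "a \<in> V" "b \<in> V" "\<not> twins V E a b" using exists_nontwin[OF Tlt n9] by blast
  have nc: "\<not> config"
  proof
    assume config
    then obtain P where P: "locating_partition V E P" "card P = card V - 2" using config_partition by blast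
    then have "partition_dimension V E \<le> card V - 2" using pd_le[OF P(1)] by simp
    then show False using pd n9 by linarith
  qed
  obtain w where w: "w \<in> V" "w \<noteq> a" "w \<noteq> b" "E a w \<noteq> E b w" using abn(3) unfolding twins_iff by blast
  obtain r where r: "r \<in> V" "w \<noteq> r" "\<not> E r w"
    using w abn by (cases "E a w") auto
  have "star \<or> S2 \<or> S3" using graph_structure[OF nc n9 r(1) w(1) r(2) r(3)] .
  then show "twin_number V E = card V - 1 \<or>
            (twin_number V E = card V - 2 \<and> induced_complete V E W (card V - 2))"
  proof (elim disjE)
    assume star then show ?thesis using star_tn[OF _ n9 W] by simp
  next
    assume S2
    then obtain r b where h: "r \<in> V" "b \<in> V" "r \<noteq> b" "\<not> E r b"
        "\<And>x y. x \<in> V - {r,b} \<Longrightarrow> y \<in> V \<Longrightarrow> y \<noteq> x \<Longrightarrow> E x y"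
      unfolding S2_def by blast
    have "twin_number V E = card V - 2 \<and> induced_complete V E W (card V - 2)"
    proof (rule clique_tn[OF n9 W h(1-3)])
      fix x y assume "x \<in> V - {r,b}" "y \<in> V - {r,b}" "x \<noteq> y" then show "E x y" using h(5) by auto
    next
      fix x y assume x: "x \<in> V - {r,b}" and y: "y \<in> V - {r,b}"
      show "twins V E x y" unfolding twins_iff using h(5) x y by auto
    next
      fix x c assume x: "x \<in> V - {r,b}" and c: "c \<in> {r,b}"
      have xr: "E x r" "E x b" using h(5) x h by auto
      have "\<not> E r b" "\<not> E b r" using h(4) Esym by blast+
      show "\<not> twins V E c x"
      proof (cases "c = r")
        case True
        have "b \<in> V" "b \<noteq> r" "b \<noteq> x" "\<not> (E r b \<longleftrightarrow> E x b)" using h x xr \<open>\<not> E r b\<close> by auto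
        then show ?thesis unfolding twins_iff using True by blast
      next
        case False
        then have cb: "c = b" using c by auto
        have "r \<in> V" "r \<noteq> b" "r \<noteq> x" "\<not> (E b r \<longleftrightarrow> E x r)" using h x xr \<open>\<not> E b r\<close> by auto
        then show ?thesis unfolding twins_iff using cb by blast
      qed
    qed
    then show ?thesis by simp
  next
    assume S3
    then obtain p b where h: "p \<in> V" "b \<in> V" "p \<noteq> b" "\<And>y. y \<in> V \<Longrightarrow> y \<noteq> p \<Longrightarrow> E p y"
        "\<And>w. E b w \<longleftrightarrow> w = p" "\<And>x y. x \<in> V - {p,b} \<Longrightarrow> y \<in> V - {p,b} \<Longrightarrow> x \<noteq> y \<Longrightarrow> E x y"
      unfolding S3_def by blast
    have xb: "\<not> E x b" if "x \<noteq> p" for x using h(5)[of x] Esym[of x b] that by auto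
    have "twin_number V E = card V - 2 \<and> induced_complete V E W (card V - 2)"
    proof (rule clique_tn[OF n9 W h(1-3)])
      fix x y assume "x \<in> V - {p,b}" "y \<in> V - {p,b}" "x \<noteq> y" then show "E x y" using h(6) by auto
    next
      fix x y assume x: "x \<in> V - {p,b}" and y: "y \<in> V - {p,b}"
      show "twins V E x y" unfolding twins_iff
      proof (intro ballI impI)
        fix z assume z: "z \<in> V" "z \<noteq> x" "z \<noteq> y"
        have xp: "E x p" "E y p" using Esym[OF h(4)[of x]] Esym[OF h(4)[of y]] x y by auto
        show "E x z \<longleftrightarrow> E y z"
        proof (cases "z = p")
          case True then show ?thesis using xp by simp
        next
          case False
          show ?thesis
          proof (cases "z = b")
            case True then show ?thesis using xb[of x] xb[of y] x y by auto
          next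
            case nb: False
            then have "E x z" "E y z" using h(6)[of x z] h(6)[of y z] x y z False by auto
            then show ?thesis by simp
          qed
        qed
      qed
    next
      fix x c assume x: "x \<in> V - {p,b}" and c: "c \<in> {p,b}"
      obtain y where y: "y \<in> V" "y \<notin> {p,b,x,x,x}" using avoid5[OF n9] by blast
      have "E x y" using h(6) x y by auto
      moreover have "\<not> E b y" using h(5) y by auto
      moreover have "E p b" using h by auto
      moreover have "\<not> E x b" using xb x by auto
      ultimately have f: "E x y" "\<not> E b y" "E p b" "\<not> E x b" by blast+
      show "\<not> twins V E c x"
      proof (cases "c = p")
        case True
        have "b \<in> V" "b \<noteq> p" "b \<noteq> x" "\<not> (E p b \<longleftrightarrow> E x b)" using h x f by auto
        then show ?thesis unfolding twins_iff using True by blast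
      next
        case False
        then have cb: "c = b" using c by auto
        have "y \<in> V" "y \<noteq> b" "y \<noteq> x" "\<not> (E b y \<longleftrightarrow> E x y)" using y f by auto
        then show ?thesis unfolding twins_iff using cb by blast
      qed
    qed
    then show ?thesis by simp
  qed
next
  assume cond: "twin_number V E = card V - 1 \<or>
            (twin_number V E = card V - 2 \<and> induced_complete V E W (card V - 2))"
  have Tlt: "twin_number V E < card V" using cond n9 by auto
  obtain a b where abn: "a \<in> V" "b \<in> V" "\<not> twins V E a b" using exists_nontwin[OF Tlt n9] by blast
  obtain P1 where P1: "locating_partition V E P1" "card P1 = card V - 1" using nontwin_partition[OF abn] by blast
  have up: "partition_dimension V E \<le> card V - 1" using pd_le[OF P1(1)] P1(2) by simp
  obtain P0 where P0: "locating_partition V E P0" "card P0 = partition_dimension V E" using pd_attained by blast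
  have "card P0 \<ge> card V - 1"
    using cond
  proof
    assume "twin_number V E = card V - 1"
    then show ?thesis using twins_inj(3)[OF P0(1) tau_props(1,2)[OF W]] tau_props(3)[OF W] by simp
  next
    assume "twin_number V E = card V - 2 \<and> induced_complete V E W (card V - 2)"
    then show ?thesis using lower_clique[OF n9 W _ _ P0(1)] by blast
  qed
  then show "partition_dimension V E = card V - 1" using up P0(2) by simp
qed

end

theorem proposition21:
  fixes V :: "'a set" and E :: "'a \<Rightarrow> 'a \<Rightarrow> bool" and W :: "'a set" and n :: nat
  assumes "simple_graph V E" and "connected_graph V E"
    and "card V = n" and "n \<ge> 9"
    and "tau_set V E W"
  shows "partition_dimension V E = n - 1 \<longleftrightarrow>
           (twin_number V E = n - 1 \<or>
            (twin_number V E = n - 2 \<and> induced_complete V E W (n - 2)))"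
proof -
  interpret sg V E using assms(1,2) by unfold_locales
  show ?thesis using main[OF _ assms(5)] assms(3,4) by simp
qed


end
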